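(* Let $\rho$ be a nonlinearity, $V_{\mathrm{in}}$ a nonempty finite set and $D\in\mathbb{N}$. The binary relation of $\rho$-isomorphism is an equivalence relation on both $\mathscr{N}^{V_{\mathrm{in}},D}_{\mathrm{G}}$ and $\mathscr{N}^{V_{\mathrm{in}},D}_{\mathrm{L}}$, and if $\mathcal{N}$ is $\rho$-isomorphic to $\mathcal{M}$, then $R_{\mathcal{N}}=R_{\mathcal{M}}$.
   Context: A nonlinearity is a continuous $\rho:\mathbb{R}\to\mathbb{R}$ not of the form $t\mapsto at+b$. GFNN with $D$-dim output: $\mathcal{N}=(V,E,V_{\mathrm{in}},V_{\mathrm{out}},\Omega,\Theta,\Lambda)$, $(V,E)$ finite loopless DAG, $V_{\mathrm{in}}$ the parentless nodes, $V_{\mathrm{out}}\subset V\setminus V_{\mathrm{in}}$, nonzero real weights $\omega_{\tilde vv}$ on edges $(v,\tilde v)$, real biases on non-input nodes, real output scalars $\lambda^{(r)},\lambda^{(r)}_w$. $\mathrm{anc}(S)$: nodes with a directed path (length $\ge0$) into $S$. $\mathrm{lv}=0$ on parentless nodes, else $1+$max of parents; LFNN: $\mathrm{lv}(\tilde v)=\mathrm{lv}(v)+1$ on edges. $R_u(t)=t_u$ on inputs, $R_u(t)=\rho(\sum_{v\in\mathrm{par}(u)}\omega_{uv}R_v(t)+\theta_u)$; $R_{\mathcal{N}}=(\lambda^{(r)}+\sum_w\lambda^{(r)}_wR_w)_r$. Non-degenerate: $V\setminus V_{\mathrm{in}}\subset\mathrm{anc}(V_{\mathrm{out}})$ and each output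 node has some nonzero $\lambda^{(r)}_w$. Affine symmetry: $(\zeta,\{(\alpha_s,\beta_s,\gamma_s)\}_{s\in\mathcal{I}})$, $\mathcal{I}$ nonempty finite, $\sum_s\alpha_s\rho(\beta_st+\gamma_s)=\zeta$ $\forall t$, no proper $\mathcal{I}'$ with $\{\rho(\beta_s\cdot+\gamma_s)\}_{\mathcal{I}'}\cup\{\mathbf1\}$ linearly dependent. Reducible: some nonempty $U$ with common parent set $P$, nonzero $\kappa_v,\beta_u$ with $\omega_{uv}=\beta_u\kappa_v$, and $\zeta$, nonzero $\alpha_u$ making $(\zeta,\{(\alpha_u,\beta_u,\theta_u)\}_{u\in U})$ an affine symmetry. Regular = irreducible + non-degenerate. $\mathscr{N}^{V_{\mathrm{in}},D}_{\mathrm{G}}$ ($\mathscr{N}^{V_{\mathrm{in}},D}_{\mathrm{L}}$) = regular GFNNs (LFNNs) with $D$-dim output and input set $V_{\mathrm{in}}$. $\rho$-modification of an irreducible $\mathcal{N}$: $A,B\subset V\setminus V_{\mathrm{in}}$ disjoint, $A\ne\varnothing$, common parent set $P$, $W=\{w:\mathrm{par}(w)\cap A\ne\varnothing\}$; (i) affine symmetry $(\zeta,\{(\alpha_u,\beta_u,\theta_u)\}_{u\in A\cup B}\cup\{(\alpha'_p,\beta'_p,\gamma'_p)\}_{p=1}^n)$, $n\ge1$; (ii) nonzero $\kappa_v$ with $\omega_{uv}=\beta_u\kappa_v$; (iii) $A\subset\mathrm{par}(w)$, nonzero $\nu_w$ with $\omega_{wu}=\nu_w\alpha_u$ ($w\in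 W,u\in A$); (iv) $A\cap V_{\mathrm{out}}=\varnothing$ or $A\subset V_{\mathrm{out}}$ with reals $\mu_r$, $\lambda^{(r)}_u=\mu_r\alpha_u$ ($u\in A$). Delete $A$ and incident edges; add $C=\{u'_1,\dots,u'_n\}$ with edges $(v,u'_p)$ of weight $\beta'_p\kappa_v$, bias $\gamma'_p$, edges $(u'_p,w)$ of weight $-\alpha'_p\nu_w$; $\theta_w\mapsto\theta_w+\zeta\nu_w$; for $w\in W,u\in B$ add edge of weight $-\alpha_u\nu_w$ if absent, else $\omega_{wu}\mapsto\omega_{wu}-\alpha_u\nu_w$, deleting it if $0$. If $A\subset V_{\mathrm{out}}$: $\lambda^{(r)}\mapsto\lambda^{(r)}+\zeta\mu_r$, $\lambda^{(r)}_{u'_p}=-\alpha'_p\mu_r$, for $u\in B$ $\lambda^{(r)}_u$ ($0$ if $u\notin V_{\mathrm{out}}$) $\mapsto\lambda^{(r)}_u-\alpha_u\mu_r$, output set $(V_{\mathrm{out}}\setminus(A\cup B))\cup C\cup\{u\in B:\text{some new }\lambda^{(r)}_u\ne0\}$; else outputs unchanged. Regular GFNNs $\mathcal{N},\mathcal{M}$ (same $D$, same inputs) are $\rho$-isomorphic if there are regular GFNNs $\mathcal{N}_1=\mathcal{N},\dots,\mathcal{N}_n=\mathcal{M}$ ($n\ge1$) with $D$-dim output and the same input set, each $\mathcal{N}_{j+1}$ a $\rho$-modification of $\mathcal{N}_j$. *)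

theory Defs
  imports Complex_Main
begin

definition nonlinearity :: "(real \<Rightarrow> real) \<Rightarrow> bool" where
  "nonlinearity \<rho> \<longleftrightarrow> continuous_on UNIV \<rho> \<and> \<not> (\<exists>a b. \<forall>t. \<rho> t = a * t + b)"

text \<open>An edge (v, u) goes from v to u and carries the
weight  weight N u v  (the paper's omega_{uv}).  Output scalars: outc N r is lambda^(r),
outw N r w is lambda^(r)_w (r = 0..D-1).\<close>

record 'v net =
  nodes   :: "'v set"
  edges   :: "('v \<times> 'v) set"
  inputs  :: "'v set"
  outputs :: "'v set"
  weight  :: "'v \<Rightarrow> 'v \<Rightarrow> real"
  bias    :: "'v \<Rightarrow> real"
  outc    :: "nat \<Rightarrow> real"
  outw    :: "nat \<Rightarrow> 'v \<Rightarrow> real"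

definition par :: "'v net \<Rightarrow> 'v \<Rightarrow> 'v set" where
  "par N u = {v. (v, u) \<in> edges N}"

definition gfnn :: "nat \<Rightarrow> 'v net \<Rightarrow> bool" where
  "gfnn D N \<longleftrightarrow>
     finite (nodes N) \<and> edges N \<subseteq> nodes N \<times> nodes N \<and> acyclic (edges N) \<and>
     inputs N = {v \<in> nodes N. par N v = {}} \<and>
     outputs N \<subseteq> nodes N - inputs N \<and>
     (\<forall>(v, u) \<in> edges N. weight N u v \<noteq> 0) \<and>
     (\<forall>u v. (v, u) \<notin> edges N \<longrightarrow> weight N u v = 0) \<and>
     (\<forall>u. u \<notin> nodes N - inputs N \<longrightarrow> bias N u = 0) \<and>
     (\<forall>r. D \<le> r \<longrightarrow> outc N r = 0) \<and>
     (\<forall>r u. D \<le> r \<or> u \<notin> outputs N \<longrightarrow> outw N r u = 0)"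

text \<open>Levels, computed with fuel (the number of nodes suffices in a DAG).\<close>

fun lv_fuel :: "'v net \<Rightarrow> nat \<Rightarrow> 'v \<Rightarrow> nat" where
  "lv_fuel N 0 u = 0"
| "lv_fuel N (Suc k) u =
     (if par N u = {} then 0 else Suc (Max (lv_fuel N k ` par N u)))"

definition level :: "'v net \<Rightarrow> 'v \<Rightarrow> nat" where
  "level N u = lv_fuel N (card (nodes N)) u"

definition lfnn :: "nat \<Rightarrow> 'v net \<Rightarrow> bool" where
  "lfnn D N \<longleftrightarrow> gfnn D N \<and> (\<forall>(v, u) \<in> edges N. level N u = Suc (level N v))"

fun R_fuel :: "(real \<Rightarrow> real) \<Rightarrow> 'v net \<Rightarrow> nat \<Rightarrow> 'v \<Rightarrow> ('v \<Rightarrow> real) \<Rightarrow> real" where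
  "R_fuel \<rho> N 0 u t = t u"
| "R_fuel \<rho> N (Suc k) u t =
     (if u \<in> inputs N then t u
      else \<rho> ((\<Sum>v\<in>par N u. weight N u v * R_fuel \<rho> N k v t) + bias N u))"

definition node_real :: "(real \<Rightarrow> real) \<Rightarrow> 'v net \<Rightarrow> 'v \<Rightarrow> ('v \<Rightarrow> real) \<Rightarrow> real" where
  "node_real \<rho> N u t = R_fuel \<rho> N (card (nodes N)) u t"

text \<open>R_N(t)_r, for r < D (r is 0-based).\<close>
definition realization :: "(real \<Rightarrow> real) \<Rightarrow> 'v net \<Rightarrow> ('v \<Rightarrow> real) \<Rightarrow> nat \<Rightarrow> real" where
  "realization \<rho> N t r = outc N r + (\<Sum>w\<in>outputs N. outw N r w * node_real \<rho> N w t)"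

definition ancestors :: "'v net \<Rightarrow> 'v set \<Rightarrow> 'v set" where
  "ancestors N S = {v. \<exists>u\<in>S. (v, u) \<in> (edges N)\<^sup>*}"

definition nondegenerate :: "nat \<Rightarrow> 'v net \<Rightarrow> bool" where
  "nondegenerate D N \<longleftrightarrow>
     nodes N - inputs N \<subseteq> ancestors N (outputs N) \<and>
     (\<forall>w\<in>outputs N. \<exists>r<D. outw N r w \<noteq> 0)"

definition lin_dep_with_one ::
  "(real \<Rightarrow> real) \<Rightarrow> 'i set \<Rightarrow> ('i \<Rightarrow> real) \<Rightarrow> ('i \<Rightarrow> real) \<Rightarrow> bool" where
  "lin_dep_with_one \<rho> J \<beta> \<gamma> \<longleftrightarrow>
     (\<exists>c0 c. (c0 \<noteq> 0 \<or> (\<exists>s\<in>J. c s \<noteq> 0)) \<and>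
            (\<forall>t. c0 + (\<Sum>s\<in>J. c s * \<rho> (\<beta> s * t + \<gamma> s)) = 0))"

definition affine_symmetry ::
  "(real \<Rightarrow> real) \<Rightarrow> 'i set \<Rightarrow> real \<Rightarrow> ('i \<Rightarrow> real) \<Rightarrow> ('i \<Rightarrow> real) \<Rightarrow> ('i \<Rightarrow> real) \<Rightarrow> bool" where
  "affine_symmetry \<rho> I \<zeta> \<alpha> \<beta> \<gamma> \<longleftrightarrow>
     finite I \<and> I \<noteq> {} \<and>
     (\<forall>t. (\<Sum>s\<in>I. \<alpha> s * \<rho> (\<beta> s * t + \<gamma> s)) = \<zeta>) \<and>
     \<not> (\<exists>J. J \<subset> I \<and> lin_dep_with_one \<rho> J \<beta> \<gamma>)"

definition reducible :: "(real \<Rightarrow> real) \<Rightarrow> 'v net \<Rightarrow> bool" where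
  "reducible \<rho> N \<longleftrightarrow>
     (\<exists>U P \<kappa> \<beta> \<zeta> \<alpha>. U \<noteq> {} \<and> U \<subseteq> nodes N - inputs N \<and>
        (\<forall>u\<in>U. par N u = P) \<and>
        (\<forall>v\<in>P. \<kappa> v \<noteq> 0) \<and> (\<forall>u\<in>U. \<beta> u \<noteq> 0 \<and> \<alpha> u \<noteq> 0) \<and>
        (\<forall>u\<in>U. \<forall>v\<in>P. weight N u v = \<beta> u * \<kappa> v) \<and>
        affine_symmetry \<rho> U \<zeta> \<alpha> \<beta> (bias N))"

definition regular :: "(real \<Rightarrow> real) \<Rightarrow> nat \<Rightarrow> 'v net \<Rightarrow> bool" where
  "regular \<rho> D N \<longleftrightarrow> gfnn D N \<and> \<not> reducible \<rho> N \<and> nondegenerate D N"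

definition regular_GFNNs :: "(real \<Rightarrow> real) \<Rightarrow> 'v set \<Rightarrow> nat \<Rightarrow> 'v net set" where
  "regular_GFNNs \<rho> Vin D = {N. regular \<rho> D N \<and> inputs N = Vin}"

definition regular_LFNNs :: "(real \<Rightarrow> real) \<Rightarrow> 'v set \<Rightarrow> nat \<Rightarrow> 'v net set" where
  "regular_LFNNs \<rho> Vin D = {N. regular \<rho> D N \<and> lfnn D N \<and> inputs N = Vin}"

definition children_of :: "'v net \<Rightarrow> 'v set \<Rightarrow> 'v set" where
  "children_of N A = {w \<in> nodes N. par N w \<inter> A \<noteq> {}}"

text \<open>The network obtained by the modification.  The new nodes u'_1..u'_n form the
set C; the triples (alpha'_p, beta'_p, gamma'_p) are alpha c, beta c, gamma c for c in C.\<close>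
definition modify ::
  "nat \<Rightarrow> 'v net \<Rightarrow> 'v set \<Rightarrow> 'v set \<Rightarrow> 'v set \<Rightarrow> 'v set \<Rightarrow>
   ('v \<Rightarrow> real) \<Rightarrow> ('v \<Rightarrow> real) \<Rightarrow> ('v \<Rightarrow> real) \<Rightarrow> real \<Rightarrow>
   ('v \<Rightarrow> real) \<Rightarrow> ('v \<Rightarrow> real) \<Rightarrow> (nat \<Rightarrow> real) \<Rightarrow> 'v net" where
  "modify D N A B C P \<alpha> \<beta> \<gamma> \<zeta> \<kappa> \<nu> \<mu> =
    (let W = children_of N A;
         isout = A \<subseteq> outputs N;
         newE = {(y, x) \<in> edges N. y \<notin> A \<and> x \<notin> A \<and> \<not> (y \<in> B \<and> x \<in> W)}
                \<union> {(y, x). y \<in> P \<and> x \<in> C}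
                \<union> {(y, x). y \<in> C \<and> x \<in> W}
                \<union> {(y, x). y \<in> B \<and> x \<in> W \<and> weight N x y - \<alpha> y * \<nu> x \<noteq> 0};
         neww = (\<lambda>x y. if x \<in> A \<or> y \<in> A then 0
                   else if x \<in> C then (if y \<in> P then \<beta> x * \<kappa> y else 0)
                   else if y \<in> C then (if x \<in> W then - (\<alpha> y * \<nu> x) else 0)
                   else if y \<in> B \<and> x \<in> W then weight N x y - \<alpha> y * \<nu> x
                   else weight N x y);
         newb = (\<lambda>x. if x \<in> A then 0 else if x \<in> C then \<gamma> x
                   else if x \<in> W then bias N x + \<zeta> * \<nu> x else bias N x);
         newoc = (\<lambda>r. if isout \<and> r < D then outc N r + \<zeta> * \<mu> r else outc N r);
         newow = (\<lambda>r x. if isout \<and> r < D then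
                      (if x \<in> C then - (\<alpha> x * \<mu> r)
                       else if x \<in> B then outw N r x - \<alpha> x * \<mu> r
                       else if x \<in> A then 0 else outw N r x)
                    else (if x \<in> A then 0 else outw N r x));
         newout = (if isout
                   then (outputs N - (A \<union> B)) \<union> C \<union> {u \<in> B. \<exists>r<D. newow r u \<noteq> 0}
                   else outputs N)
     in \<lparr> nodes = (nodes N - A) \<union> C, edges = newE, inputs = inputs N,
          outputs = newout, weight = neww, bias = newb, outc = newoc, outw = newow \<rparr>)"

definition is_rho_modification :: "(real \<Rightarrow> real) \<Rightarrow> nat \<Rightarrow> 'v net \<Rightarrow> 'v net \<Rightarrow> bool" where
  "is_rho_modification \<rho> D N M \<longleftrightarrow> \<not> reducible \<rho> N \<and>
    (\<exists>A B C P \<alpha> \<beta> \<gamma> \<zeta> \<kappa> \<nu> \<mu>.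
       A \<noteq> {} \<and> A \<subseteq> nodes N - inputs N \<and> B \<subseteq> nodes N - inputs N \<and> A \<inter> B = {} \<and>
       (\<forall>u\<in>A \<union> B. par N u = P) \<and>
       finite C \<and> C \<noteq> {} \<and> C \<inter> nodes N = {} \<and>
       affine_symmetry \<rho> (A \<union> B \<union> C) \<zeta> \<alpha> \<beta> (\<lambda>s. if s \<in> C then \<gamma> s else bias N s) \<and>
       (\<forall>v\<in>P. \<kappa> v \<noteq> 0) \<and> (\<forall>u\<in>A \<union> B. \<forall>v\<in>P. weight N u v = \<beta> u * \<kappa> v) \<and>
       (\<forall>w\<in>children_of N A. A \<subseteq> par N w \<and> \<nu> w \<noteq> 0 \<and>
                              (\<forall>u\<in>A. weight N w u = \<nu> w * \<alpha> u)) \<and>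
       (A \<inter> outputs N = {} \<or>
        (A \<subseteq> outputs N \<and> (\<forall>r<D. \<forall>u\<in>A. outw N r u = \<mu> r * \<alpha> u))) \<and>
       M = modify D N A B C P \<alpha> \<beta> \<gamma> \<zeta> \<kappa> \<nu> \<mu>)"

definition rho_step :: "(real \<Rightarrow> real) \<Rightarrow> nat \<Rightarrow> 'v net \<Rightarrow> 'v net \<Rightarrow> bool" where
  "rho_step \<rho> D N M \<longleftrightarrow> regular \<rho> D N \<and> regular \<rho> D M \<and> inputs M = inputs N \<and>
                         is_rho_modification \<rho> D N M"

definition rho_isomorphic :: "(real \<Rightarrow> real) \<Rightarrow> nat \<Rightarrow> 'v net \<Rightarrow> 'v net \<Rightarrow> bool" where
  "rho_isomorphic \<rho> D N M \<longleftrightarrow> regular \<rho> D N \<and> regular \<rho> D M \<and> inputs N = inputs M \<and>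
                               (rho_step \<rho> D)\<^sup>*\<^sup>* N M"

end

theory Submission
  imports Defs
begin


definition anc :: "'v net \<Rightarrow> 'v \<Rightarrow> 'v set" where
  "anc N u = {v. (v, u) \<in> (edges N)\<^sup>+}"

lemma par_nodes: "gfnn D N \<Longrightarrow> par N u \<subseteq> nodes N"
  unfolding gfnn_def par_def by auto

lemma gfnn_finite: "gfnn D N \<Longrightarrow> finite (nodes N)"
  unfolding gfnn_def by simp

lemma par_finite: "gfnn D N \<Longrightarrow> finite (par N u)"
  by (meson finite_subset par_nodes gfnn_finite)

lemma anc_nodes: "gfnn D N \<Longrightarrow> anc N u \<subseteq> nodes N"
proof
  fix v assume g: "gfnn D N" and "v \<in> anc N u"
  then have "(v, u) \<in> (edges N)\<^sup>+" by (simp add: anc_def)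
  then show "v \<in> nodes N"
  proof (induction rule: trancl_induct)
    case (base y) then show ?case using g unfolding gfnn_def by auto
  next
    case (step y z) then show ?case by simp
  qed
qed

lemma anc_finite: "gfnn D N \<Longrightarrow> finite (anc N u)"
  by (meson finite_subset anc_nodes gfnn_finite)

lemma not_self_anc: "gfnn D N \<Longrightarrow> u \<notin> anc N u"
  unfolding gfnn_def anc_def acyclic_def by auto

lemma par_anc_less:
  assumes g: "gfnn D N" and v: "v \<in> par N u"
  shows "card (anc N v) < card (anc N u)"
proof -
  have e: "(v, u) \<in> edges N" using v by (simp add: par_def)
  have "anc N v \<subseteq> anc N u" using e unfolding anc_def by (auto intro: trancl_into_trancl)
  moreover have "v \<in> anc N u" using e unfolding anc_def by auto
  moreover have "v \<notin> anc N v" using not_self_anc[OF g] .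
  ultimately have "anc N v \<subset> anc N u" by blast
  then show ?thesis using anc_finite[OF g] by (simp add: psubset_card_mono)
qed

lemma R_fuel_input: "u \<in> inputs N \<Longrightarrow> R_fuel \<rho> N k u t = t u"
  by (cases k) auto

lemma noninput_par: "gfnn D N \<Longrightarrow> u \<in> nodes N \<Longrightarrow> u \<notin> inputs N \<Longrightarrow> par N u \<noteq> {}"
  unfolding gfnn_def by auto

lemma R_stable:
  assumes g: "gfnn D N"
  shows "u \<in> nodes N \<Longrightarrow> card (anc N u) \<le> k \<Longrightarrow>
         R_fuel \<rho> N k u t = R_fuel \<rho> N (card (anc N u)) u t"
proof (induction "card (anc N u)" arbitrary: u k rule: less_induct)
  case less
  show ?case
  proof (cases "u \<in> inputs N")
    case True then show ?thesis by (simp add: R_fuel_input)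
  next
    case False
    then obtain v where v: "v \<in> par N u" using noninput_par[OF g less.prems(1)] by blast
    then have "card (anc N u) > 0" using par_anc_less[OF g v] by simp
    then obtain m where m: "card (anc N u) = Suc m" by (cases "card (anc N u)") auto
    then obtain k' where k: "k = Suc k'" and mk: "m \<le> k'" using less.prems(2) by (cases k) auto
    have "\<And>v. v \<in> par N u \<Longrightarrow> R_fuel \<rho> N k' v t = R_fuel \<rho> N m v t"
    proof -
      fix v assume v: "v \<in> par N u"
      have lt: "card (anc N v) < card (anc N u)" by (rule par_anc_less[OF g v])
      have vn: "v \<in> nodes N" using par_nodes[OF g] v by blast
      have c1: "card (anc N v) \<le> k'" using lt m mk by simp
      have c2: "card (anc N v) \<le> m" using lt m by simp
      have "R_fuel \<rho> N k' v t = R_fuel \<rho> N (card (anc N v)) v t"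
        by (rule less.hyps[OF lt vn c1])
      moreover have "R_fuel \<rho> N m v t = R_fuel \<rho> N (card (anc N v)) v t"
        by (rule less.hyps[OF lt vn c2])
      ultimately show "R_fuel \<rho> N k' v t = R_fuel \<rho> N m v t" by simp
    qed
    then show ?thesis using False k m by simp
  qed
qed

lemma anc_card_lt: "gfnn D N \<Longrightarrow> u \<in> nodes N \<Longrightarrow> card (anc N u) < card (nodes N)"
proof -
  assume g: "gfnn D N" and u: "u \<in> nodes N"
  have "anc N u \<subset> nodes N" using anc_nodes[OF g] not_self_anc[OF g] u by blast
  then show ?thesis using g unfolding gfnn_def by (simp add: psubset_card_mono)
qed

lemma node_real_eq:
  assumes g: "gfnn D N" and u: "u \<in> nodes N"
  shows "node_real \<rho> N u t = (if u \<in> inputs N then t u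
           else \<rho> ((\<Sum>v\<in>par N u. weight N u v * node_real \<rho> N v t) + bias N u))"
proof -
  obtain k where k: "card (nodes N) = Suc k" and ak: "card (anc N u) \<le> k"
    using anc_card_lt[OF g u] by (cases "card (nodes N)") auto
  have "\<And>v. v \<in> par N u \<Longrightarrow> R_fuel \<rho> N k v t = node_real \<rho> N v t"
  proof -
    fix v assume v: "v \<in> par N u"
    have lt: "card (anc N v) < card (anc N u)" by (rule par_anc_less[OF g v])
    have vn: "v \<in> nodes N" using par_nodes[OF g] v by blast
    have c1: "card (anc N v) \<le> k" using lt ak by simp
    have c2: "card (anc N v) \<le> card (nodes N)" using lt ak k by simp
    show "R_fuel \<rho> N k v t = node_real \<rho> N v t"
      unfolding node_real_def
      using R_stable[OF g vn c1, of \<rho> t] R_stable[OF g vn c2, of \<rho> t] by simp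
  qed
  then show ?thesis unfolding node_real_def k by simp
qed

lemma node_real_unique:
  assumes g: "gfnn D N"
    and f: "\<And>u. u \<in> nodes N \<Longrightarrow> f u = (if u \<in> inputs N then t u
           else \<rho> ((\<Sum>v\<in>par N u. weight N u v * f v) + bias N u))"
  shows "u \<in> nodes N \<Longrightarrow> node_real \<rho> N u t = f u"
proof (induction "card (anc N u)" arbitrary: u rule: less_induct)
  case less
  have "\<And>v. v \<in> par N u \<Longrightarrow> node_real \<rho> N v t = f v"
    using less.hyps par_anc_less[OF g] par_nodes[OF g] by blast
  then show ?case using node_real_eq[OF g less.prems, of \<rho> t] f[OF less.prems] by simp
qed



locale modif =
  fixes \<rho> :: "real \<Rightarrow> real" and D :: nat and N :: "'v net" and A B C P :: "'v set"
    and \<alpha> \<beta> \<gamma> :: "'v \<Rightarrow> real" and \<zeta> :: real and \<kappa> \<nu> :: "'v \<Rightarrow> real" and \<mu> :: "nat \<Rightarrow> real"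
  assumes gN: "gfnn D N" and ndN: "nondegenerate D N"
    and gM: "gfnn D (modify D N A B C P \<alpha> \<beta> \<gamma> \<zeta> \<kappa> \<nu> \<mu>)"
    and A_ne: "A \<noteq> {}" and A_sub: "A \<subseteq> nodes N - inputs N"
    and B_sub: "B \<subseteq> nodes N - inputs N" and AB: "A \<inter> B = {}"
    and parAB: "\<forall>u\<in>A \<union> B. par N u = P"
    and finC: "finite C" and C_ne: "C \<noteq> {}" and C_disj: "C \<inter> nodes N = {}"
    and aff: "affine_symmetry \<rho> (A \<union> B \<union> C) \<zeta> \<alpha> \<beta> (\<lambda>s. if s \<in> C then \<gamma> s else bias N s)"
    and kap: "\<forall>v\<in>P. \<kappa> v \<noteq> 0"
    and wAB: "\<forall>u\<in>A \<union> B. \<forall>v\<in>P. weight N u v = \<beta> u * \<kappa> v"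
    and chW: "\<forall>w\<in>children_of N A. A \<subseteq> par N w \<and> \<nu> w \<noteq> 0 \<and>
                              (\<forall>u\<in>A. weight N w u = \<nu> w * \<alpha> u)"
    and outcnd: "A \<inter> outputs N = {} \<or>
        (A \<subseteq> outputs N \<and> (\<forall>r<D. \<forall>u\<in>A. outw N r u = \<mu> r * \<alpha> u))"
begin

abbreviation M where "M \<equiv> modify D N A B C P \<alpha> \<beta> \<gamma> \<zeta> \<kappa> \<nu> \<mu>"
abbreviation W where "W \<equiv> children_of N A"

lemma nodes_M: "nodes M = (nodes N - A) \<union> C"
  by (simp add: modify_def Let_def)
lemma inputs_M: "inputs M = inputs N"
  by (simp add: modify_def Let_def)
lemma edges_M: "edges M = {(y, x) \<in> edges N. y \<notin> A \<and> x \<notin> A \<and> \<not> (y \<in> B \<and> x \<in> W)}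
                \<union> {(y, x). y \<in> P \<and> x \<in> C}
                \<union> {(y, x). y \<in> C \<and> x \<in> W}
                \<union> {(y, x). y \<in> B \<and> x \<in> W \<and> weight N x y - \<alpha> y * \<nu> x \<noteq> 0}"
  by (simp add: modify_def Let_def)
lemma weight_M: "weight M x y = (if x \<in> A \<or> y \<in> A then 0
                   else if x \<in> C then (if y \<in> P then \<beta> x * \<kappa> y else 0)
                   else if y \<in> C then (if x \<in> W then - (\<alpha> y * \<nu> x) else 0)
                   else if y \<in> B \<and> x \<in> W then weight N x y - \<alpha> y * \<nu> x
                   else weight N x y)"
  by (simp add: modify_def Let_def)
lemma bias_M: "bias M x = (if x \<in> A then 0 else if x \<in> C then \<gamma> x
                   else if x \<in> W then bias N x + \<zeta> * \<nu> x else bias N x)"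
  by (simp add: modify_def Let_def)
lemma outc_M: "outc M r = (if A \<subseteq> outputs N \<and> r < D then outc N r + \<zeta> * \<mu> r else outc N r)"
  by (simp add: modify_def Let_def)
lemma outw_M: "outw M r x = (if A \<subseteq> outputs N \<and> r < D then
                      (if x \<in> C then - (\<alpha> x * \<mu> r)
                       else if x \<in> B then outw N r x - \<alpha> x * \<mu> r
                       else if x \<in> A then 0 else outw N r x)
                    else (if x \<in> A then 0 else outw N r x))"
  by (simp add: modify_def Let_def)
lemma outputs_M: "outputs M = (if A \<subseteq> outputs N
                   then (outputs N - (A \<union> B)) \<union> C \<union> {u \<in> B. \<exists>r<D. outw M r u \<noteq> 0}
                   else outputs N)"
  by (simp add: modify_def Let_def)

lemma edges_N: "(y, x) \<in> edges N \<Longrightarrow> y \<in> nodes N \<and> x \<in> nodes N"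
  using gN unfolding gfnn_def by auto

lemma wN0: "(y, x) \<notin> edges N \<Longrightarrow> weight N x y = 0"
  using gN unfolding gfnn_def by auto

lemma wM0: "(y, x) \<notin> edges M \<Longrightarrow> weight M x y = 0"
  using gM unfolding gfnn_def by blast

lemma P_nodes: "P \<subseteq> nodes N"
  using A_ne parAB par_nodes[OF gN] by blast

lemma AP: "A \<inter> P = {}"
proof -
  { fix a assume a: "a \<in> A" "a \<in> P"
    then have "(a, a) \<in> edges N" using parAB by (auto simp: par_def)
    then have False using gN unfolding gfnn_def acyclic_def by auto }
  then show ?thesis by blast
qed

lemma W_nodes: "W \<subseteq> nodes N"
  unfolding children_of_def by auto

lemma ABW: "(A \<union> B) \<inter> W = {}"
  using AP parAB unfolding children_of_def by auto

lemma W_ninp: "W \<inter> inputs N = {}"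
  using gN unfolding children_of_def gfnn_def by auto

lemma par_M_C: "c \<in> C \<Longrightarrow> par M c = P"
  using C_disj W_nodes P_nodes unfolding par_def edges_M by (auto dest: edges_N)

lemma par_M_B: "b \<in> B \<Longrightarrow> par M b = P"
  using C_disj W_nodes P_nodes AB ABW parAB AP unfolding par_def edges_M by (auto dest: edges_N)

lemma par_M_other: "x \<notin> W \<Longrightarrow> x \<notin> C \<Longrightarrow> x \<notin> A \<Longrightarrow> par M x = par N x"
  unfolding par_def edges_M children_of_def by (auto dest: edges_N)

lemma par_N_nodes: "par N x \<subseteq> nodes N" using par_nodes[OF gN] .

end



context modif begin

definition sP where "sP t = (\<Sum>v\<in>P. \<kappa> v * node_real \<rho> N v t)"
definition g where "g t x = (if x \<in> C then \<rho> (\<beta> x * sP t + \<gamma> x) else node_real \<rho> N x t)"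

abbreviation I where "I \<equiv> A \<union> B \<union> C"
abbreviation gam where "gam \<equiv> (\<lambda>s. if s \<in> C then \<gamma> s else bias N s)"

lemma AB_real: "y \<in> A \<union> B \<Longrightarrow> node_real \<rho> N y t = \<rho> (\<beta> y * sP t + bias N y)"
proof -
  assume y: "y \<in> A \<union> B"
  then have yn: "y \<in> nodes N" "y \<notin> inputs N" using A_sub B_sub by auto
  have "(\<Sum>v\<in>par N y. weight N y v * node_real \<rho> N v t) = (\<Sum>v\<in>P. \<beta> y * (\<kappa> v * node_real \<rho> N v t))"
    using parAB wAB y by (auto intro!: sum.cong)
  also have "\<dots> = \<beta> y * sP t" unfolding sP_def by (simp add: sum_distrib_left)
  finally show ?thesis using node_real_eq[OF gN yn(1), of \<rho> t] yn(2) by simp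
qed

lemma g_I: "y \<in> I \<Longrightarrow> g t y = \<rho> (\<beta> y * sP t + gam y)"
  using AB_real AB C_disj A_sub B_sub unfolding g_def by auto

lemma sum_I: "(\<Sum>y\<in>I. \<alpha> y * g t y) = \<zeta>"
proof -
  have "(\<Sum>y\<in>I. \<alpha> y * g t y) = (\<Sum>y\<in>I. \<alpha> y * \<rho> (\<beta> y * sP t + gam y))"
    using g_I by (auto intro!: sum.cong)
  also have "\<dots> = \<zeta>" using aff unfolding affine_symmetry_def by blast
  finally show ?thesis .
qed

lemma finT: "finite (nodes N \<union> C)" using gfnn_finite[OF gN] finC by simp

lemma I_T: "I \<subseteq> nodes N \<union> C" using A_sub B_sub by auto

lemma sum_T_I: "(\<Sum>y\<in>nodes N \<union> C. (if y \<in> I then \<alpha> y * g t y else 0)) = \<zeta>"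
proof -
  have "(\<Sum>y\<in>nodes N \<union> C. (if y \<in> I then \<alpha> y * g t y else 0)) = (\<Sum>y\<in>(nodes N \<union> C) \<inter> I. \<alpha> y * g t y)"
    using finT by (simp add: sum.inter_restrict)
  also have "(nodes N \<union> C) \<inter> I = I" using I_T by blast
  finally show ?thesis using sum_I by simp
qed

lemma g_eq:
  assumes x: "x \<in> nodes M"
  shows "g t x = (if x \<in> inputs M then t x
           else \<rho> ((\<Sum>v\<in>par M x. weight M x v * g t v) + bias M x))"
proof -
  consider (C) "x \<in> C" | (W) "x \<in> W" | (O) "x \<notin> C" "x \<notin> W" "x \<notin> A" "x \<in> nodes N"
    using x nodes_M by auto
  then show ?thesis
  proof cases
    case C
    have xi: "x \<notin> inputs M" using C C_disj gN inputs_M unfolding gfnn_def by auto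
    have "(\<Sum>v\<in>par M x. weight M x v * g t v) = (\<Sum>v\<in>P. \<beta> x * (\<kappa> v * node_real \<rho> N v t))"
      using par_M_C[OF C] C AP P_nodes C_disj A_sub unfolding weight_M g_def
      by (intro sum.cong) auto
    also have "\<dots> = \<beta> x * sP t" unfolding sP_def by (simp add: sum_distrib_left)
    finally show ?thesis using xi C unfolding g_def bias_M
      using AB C_disj A_sub by auto
  next
    case O
    have xC: "x \<notin> C" using O by simp
    have "(\<Sum>v\<in>par M x. weight M x v * g t v) = (\<Sum>v\<in>par N x. weight N x v * node_real \<rho> N v t)"
    proof (rule sum.cong)
      show "par M x = par N x" using par_M_other O by simp
      fix v assume v: "v \<in> par N x"
      have "v \<in> nodes N" using v par_N_nodes by blast
      moreover have "v \<notin> A" using v O unfolding children_of_def by auto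
      ultimately show "weight M x v * g t v = weight N x v * node_real \<rho> N v t"
        using O C_disj unfolding weight_M g_def by auto
    qed
    then show ?thesis using O node_real_eq[OF gN O(4), of \<rho> t] inputs_M
      unfolding g_def bias_M by simp
  next
    case W
    have xn: "x \<in> nodes N" "x \<notin> inputs N" "x \<notin> A" "x \<notin> C" "x \<notin> B"
      using W W_nodes W_ninp ABW C_disj by auto
    let ?T = "nodes N \<union> C"
    have s1: "(\<Sum>v\<in>par M x. weight M x v * g t v) = (\<Sum>v\<in>?T. weight M x v * g t v)"
    proof (rule sum.mono_neutral_left[OF finT])
      show "par M x \<subseteq> ?T" using par_nodes[OF gM, of x] nodes_M by auto
      show "\<forall>i\<in>?T - par M x. weight M x i * g t i = 0" using wM0 unfolding par_def by auto
    qed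
    have s2: "(\<Sum>v\<in>par N x. weight N x v * node_real \<rho> N v t) = (\<Sum>v\<in>?T. weight N x v * node_real \<rho> N v t)"
    proof (rule sum.mono_neutral_left[OF finT])
      show "par N x \<subseteq> ?T" using par_N_nodes by auto
      show "\<forall>i\<in>?T - par N x. weight N x i * node_real \<rho> N i t = 0" using wN0 unfolding par_def by auto
    qed
    have pw: "weight M x v * g t v = weight N x v * node_real \<rho> N v t - \<nu> x * (if v \<in> I then \<alpha> v * g t v else 0)"
      if v: "v \<in> ?T" for v
    proof -
      consider (a) "v \<in> A" | (b) "v \<in> B" | (c) "v \<in> C" | (o) "v \<notin> I" by blast
      then show ?thesis
      proof cases
        case a then show ?thesis using xn W chW C_disj A_sub unfolding weight_M g_def by auto
      next
        case b then show ?thesis using xn W C_disj B_sub AB unfolding weight_M g_def by (auto simp: algebra_simps)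
      next
        case c
        have "weight N x v = 0" using c C_disj wN0 edges_N by blast
        then show ?thesis using c xn W C_disj A_sub unfolding weight_M by auto
      next
        case o then show ?thesis using xn unfolding weight_M g_def by auto
      qed
    qed
    have "(\<Sum>v\<in>?T. weight M x v * g t v) = (\<Sum>v\<in>?T. weight N x v * node_real \<rho> N v t)
            - \<nu> x * (\<Sum>v\<in>?T. (if v \<in> I then \<alpha> v * g t v else 0))"
      using pw by (simp add: sum_subtractf sum_distrib_left)
    also have "\<dots> = (\<Sum>v\<in>?T. weight N x v * node_real \<rho> N v t) - \<nu> x * \<zeta>"
      using sum_T_I by simp
    finally have "(\<Sum>v\<in>par M x. weight M x v * g t v) + bias M x
        = (\<Sum>v\<in>par N x. weight N x v * node_real \<rho> N v t) + bias N x"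
      using s1 s2 W xn unfolding bias_M by simp
    then show ?thesis using node_real_eq[OF gN xn(1), of \<rho> t] xn inputs_M
      unfolding g_def by simp
  qed
qed

lemma node_real_M: "x \<in> nodes M \<Longrightarrow> node_real \<rho> M x t = g t x"
  by (rule node_real_unique[OF gM g_eq])

end



context modif begin

lemma outN0: "x \<notin> outputs N \<Longrightarrow> outw N r x = 0"
  using gN unfolding gfnn_def by blast
lemma outM0: "x \<notin> outputs M \<Longrightarrow> outw M r x = 0"
  using gM unfolding gfnn_def by blast
lemma outputs_N_nodes: "outputs N \<subseteq> nodes N"
  using gN unfolding gfnn_def by blast
lemma outputs_M_nodes: "outputs M \<subseteq> nodes M"
  using gM unfolding gfnn_def by blast

lemma realization_M:
  assumes r: "r < D"
  shows "realization \<rho> M t r = realization \<rho> N t r"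
proof (cases "A \<subseteq> outputs N")
  case False
  then have Ao: "A \<inter> outputs N = {}" using outcnd by blast
  have o: "outputs M = outputs N" using False outputs_M by simp
  have "(\<Sum>w\<in>outputs M. outw M r w * node_real \<rho> M w t) = (\<Sum>w\<in>outputs N. outw N r w * node_real \<rho> N w t)"
  proof (rule sum.cong)
    show "outputs M = outputs N" by (rule o)
    fix w assume w: "w \<in> outputs N"
    have wn: "w \<in> nodes N" "w \<notin> A" "w \<notin> C" using w Ao outputs_N_nodes C_disj by auto
    then have "w \<in> nodes M" using nodes_M by simp
    then show "outw M r w * node_real \<rho> M w t = outw N r w * node_real \<rho> N w t"
      using node_real_M wn False unfolding outw_M g_def by simp
  qed
  then show ?thesis unfolding realization_def outc_M using False by simp
next
  case True
  then have mu: "\<forall>r<D. \<forall>u\<in>A. outw N r u = \<mu> r * \<alpha> u" using outcnd A_ne by blast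
  let ?T = "nodes N \<union> C"
  have s1: "(\<Sum>w\<in>outputs M. outw M r w * node_real \<rho> M w t) = (\<Sum>w\<in>?T. outw M r w * g t w)"
  proof -
    have "(\<Sum>w\<in>outputs M. outw M r w * node_real \<rho> M w t) = (\<Sum>w\<in>outputs M. outw M r w * g t w)"
      using node_real_M outputs_M_nodes by (auto intro!: sum.cong)
    also have "\<dots> = (\<Sum>w\<in>?T. outw M r w * g t w)"
    proof (rule sum.mono_neutral_left[OF finT])
      show "outputs M \<subseteq> ?T" using outputs_M_nodes nodes_M by auto
      show "\<forall>i\<in>?T - outputs M. outw M r i * g t i = 0" using outM0 by auto
    qed
    finally show ?thesis .
  qed
  have s2: "(\<Sum>w\<in>outputs N. outw N r w * node_real \<rho> N w t) = (\<Sum>w\<in>?T. outw N r w * node_real \<rho> N w t)"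
  proof (rule sum.mono_neutral_left[OF finT])
    show "outputs N \<subseteq> ?T" using outputs_N_nodes by auto
    show "\<forall>i\<in>?T - outputs N. outw N r i * node_real \<rho> N i t = 0" using outN0 by auto
  qed
  have pw: "outw M r w * g t w = outw N r w * node_real \<rho> N w t - \<mu> r * (if w \<in> I then \<alpha> w * g t w else 0)"
    if w: "w \<in> ?T" for w
  proof -
    consider (a) "w \<in> A" | (b) "w \<in> B" | (c) "w \<in> C" | (o) "w \<notin> I" by blast
    then show ?thesis
    proof cases
      case a then show ?thesis using True r mu C_disj A_sub AB unfolding outw_M g_def by auto
    next
      case b then show ?thesis using True r C_disj B_sub AB unfolding outw_M g_def by (auto simp: algebra_simps)
    next
      case c
      have "outw N r w = 0" using c C_disj outN0 outputs_N_nodes by blast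
      then show ?thesis using c True r unfolding outw_M by auto
    next
      case o then show ?thesis using True r unfolding outw_M g_def by auto
    qed
  qed
  have "(\<Sum>w\<in>?T. outw M r w * g t w) = (\<Sum>w\<in>?T. outw N r w * node_real \<rho> N w t)
          - \<mu> r * (\<Sum>w\<in>?T. (if w \<in> I then \<alpha> w * g t w else 0))"
    using pw by (simp add: sum_subtractf sum_distrib_left)
  also have "\<dots> = (\<Sum>w\<in>?T. outw N r w * node_real \<rho> N w t) - \<mu> r * \<zeta>"
    using sum_T_I by simp
  finally show ?thesis unfolding realization_def outc_M using True r s1 s2 by simp
qed

end



lemma lin_dep_cong:
  "(\<And>s. s \<in> J \<Longrightarrow> \<gamma>1 s = \<gamma>2 s) \<Longrightarrow> lin_dep_with_one \<rho> J \<beta> \<gamma>1 = lin_dep_with_one \<rho> J \<beta> \<gamma>2"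
proof -
  assume h: "\<And>s. s \<in> J \<Longrightarrow> \<gamma>1 s = \<gamma>2 s"
  have "\<And>c t. (\<Sum>s\<in>J. c s * \<rho> (\<beta> s * t + \<gamma>1 s)) = (\<Sum>s\<in>J. c s * \<rho> (\<beta> s * t + \<gamma>2 s))"
    using h by (auto intro!: sum.cong)
  then show ?thesis unfolding lin_dep_with_one_def by simp
qed

lemma affine_symmetry_neg:
  assumes "affine_symmetry \<rho> I \<zeta> \<alpha> \<beta> \<gamma>1" and "\<And>s. s \<in> I \<Longrightarrow> \<gamma>1 s = \<gamma>2 s"
  shows "affine_symmetry \<rho> I (- \<zeta>) (\<lambda>s. - \<alpha> s) \<beta> \<gamma>2"
proof -
  have fin: "finite I" "I \<noteq> {}" and s: "\<And>t. (\<Sum>s\<in>I. \<alpha> s * \<rho> (\<beta> s * t + \<gamma>1 s)) = \<zeta>"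
    and nd: "\<not> (\<exists>J. J \<subset> I \<and> lin_dep_with_one \<rho> J \<beta> \<gamma>1)"
    using assms(1) unfolding affine_symmetry_def by auto
  have "\<And>t. (\<Sum>s\<in>I. - \<alpha> s * \<rho> (\<beta> s * t + \<gamma>2 s)) = - \<zeta>"
  proof -
    fix t
    have "(\<Sum>s\<in>I. - \<alpha> s * \<rho> (\<beta> s * t + \<gamma>2 s)) = - (\<Sum>s\<in>I. \<alpha> s * \<rho> (\<beta> s * t + \<gamma>1 s))"
      using assms(2) by (simp add: sum_negf[symmetric])
    then show "(\<Sum>s\<in>I. - \<alpha> s * \<rho> (\<beta> s * t + \<gamma>2 s)) = - \<zeta>" using s by simp
  qed
  moreover have "\<not> (\<exists>J. J \<subset> I \<and> lin_dep_with_one \<rho> J \<beta> \<gamma>2)"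
  proof
    assume "\<exists>J. J \<subset> I \<and> lin_dep_with_one \<rho> J \<beta> \<gamma>2"
    then obtain J where J: "J \<subset> I" "lin_dep_with_one \<rho> J \<beta> \<gamma>2" by blast
    have "lin_dep_with_one \<rho> J \<beta> \<gamma>1" using J lin_dep_cong[of J \<gamma>1 \<gamma>2 \<rho> \<beta>] assms(2) by blast
    then show False using nd J by blast
  qed
  ultimately show ?thesis using fin unfolding affine_symmetry_def by simp
qed

lemma mod_nodes: "nodes (modify D N A B C P \<alpha> \<beta> \<gamma> \<zeta> \<kappa> \<nu> \<mu>) = (nodes N - A) \<union> C"
  by (simp add: modify_def Let_def)
lemma mod_inputs: "inputs (modify D N A B C P \<alpha> \<beta> \<gamma> \<zeta> \<kappa> \<nu> \<mu>) = inputs N"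
  by (simp add: modify_def Let_def)
lemma mod_edges: "edges (modify D N A B C P \<alpha> \<beta> \<gamma> \<zeta> \<kappa> \<nu> \<mu>) =
                {(y, x) \<in> edges N. y \<notin> A \<and> x \<notin> A \<and> \<not> (y \<in> B \<and> x \<in> children_of N A)}
                \<union> {(y, x). y \<in> P \<and> x \<in> C}
                \<union> {(y, x). y \<in> C \<and> x \<in> children_of N A}
                \<union> {(y, x). y \<in> B \<and> x \<in> children_of N A \<and> weight N x y - \<alpha> y * \<nu> x \<noteq> 0}"
  by (simp add: modify_def Let_def)
lemma mod_weight: "weight (modify D N A B C P \<alpha> \<beta> \<gamma> \<zeta> \<kappa> \<nu> \<mu>) x y = (if x \<in> A \<or> y \<in> A then 0
                   else if x \<in> C then (if y \<in> P then \<beta> x * \<kappa> y else 0)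
                   else if y \<in> C then (if x \<in> children_of N A then - (\<alpha> y * \<nu> x) else 0)
                   else if y \<in> B \<and> x \<in> children_of N A then weight N x y - \<alpha> y * \<nu> x
                   else weight N x y)"
  by (simp add: modify_def Let_def)
lemma mod_bias: "bias (modify D N A B C P \<alpha> \<beta> \<gamma> \<zeta> \<kappa> \<nu> \<mu>) x = (if x \<in> A then 0 else if x \<in> C then \<gamma> x
                   else if x \<in> children_of N A then bias N x + \<zeta> * \<nu> x else bias N x)"
  by (simp add: modify_def Let_def)
lemma mod_outc: "outc (modify D N A B C P \<alpha> \<beta> \<gamma> \<zeta> \<kappa> \<nu> \<mu>) r = (if A \<subseteq> outputs N \<and> r < D then outc N r + \<zeta> * \<mu> r else outc N r)"
  by (simp add: modify_def Let_def)
lemma mod_outw: "outw (modify D N A B C P \<alpha> \<beta> \<gamma> \<zeta> \<kappa> \<nu> \<mu>) r x = (if A \<subseteq> outputs N \<and> r < D then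
                      (if x \<in> C then - (\<alpha> x * \<mu> r)
                       else if x \<in> B then outw N r x - \<alpha> x * \<mu> r
                       else if x \<in> A then 0 else outw N r x)
                    else (if x \<in> A then 0 else outw N r x))"
  by (simp add: modify_def Let_def)
lemma mod_outputs: "outputs (modify D N A B C P \<alpha> \<beta> \<gamma> \<zeta> \<kappa> \<nu> \<mu>) = (if A \<subseteq> outputs N
                   then (outputs N - (A \<union> B)) \<union> C \<union> {u \<in> B. \<exists>r<D. outw (modify D N A B C P \<alpha> \<beta> \<gamma> \<zeta> \<kappa> \<nu> \<mu>) r u \<noteq> 0}
                   else outputs N)"
  by (simp add: modify_def Let_def)
lemma mod_more: "net.more (modify D N A B C P \<alpha> \<beta> \<gamma> \<zeta> \<kappa> \<nu> \<mu>) = ()"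
  by (simp add: modify_def Let_def)

context modif begin

abbreviation al' where "al' \<equiv> (\<lambda>s. - \<alpha> s)"
abbreviation N' where "N' \<equiv> modify D M C B A P al' \<beta> (bias N) (- \<zeta>) \<kappa> \<nu> \<mu>"

lemma W_M: "children_of M C = W"
proof -
  obtain c where c: "c \<in> C" using C_ne by blast
  have "\<And>w. w \<in> W \<Longrightarrow> w \<in> nodes M \<and> (c, w) \<in> edges M"
    using c ABW W_nodes unfolding nodes_M edges_M by auto
  then have "W \<subseteq> children_of M C" using c unfolding children_of_def par_def by blast
  moreover have "children_of M C \<subseteq> W"
    unfolding children_of_def par_def edges_M using C_disj P_nodes by (auto dest: edges_N)
  ultimately show ?thesis by blast
qed

lemma N'_nodes: "nodes N' = nodes N"
  using nodes_M A_sub C_disj mod_nodes[of D M C B A P al' \<beta> "bias N" "- \<zeta>" \<kappa> \<nu> \<mu>] by auto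

lemma N'_inputs: "inputs N' = inputs N"
  using inputs_M mod_inputs[of D M C B A P al' \<beta> "bias N" "- \<zeta>" \<kappa> \<nu> \<mu>] by simp

lemma N'_weight: "weight N' x y = weight N x y"
proof -
  have e: "weight N' x y = (if x \<in> C \<or> y \<in> C then 0
                   else if x \<in> A then (if y \<in> P then \<beta> x * \<kappa> y else 0)
                   else if y \<in> A then (if x \<in> W then - (al' y * \<nu> x) else 0)
                   else if y \<in> B \<and> x \<in> W then weight M x y - al' y * \<nu> x
                   else weight M x y)"
    using W_M mod_weight[of D M C B A P al' \<beta> "bias N" "- \<zeta>" \<kappa> \<nu> \<mu>] by simp
  consider (c) "x \<in> C \<or> y \<in> C" | (a) "x \<notin> C" "y \<notin> C" "x \<in> A"
    | (a2) "x \<notin> C" "y \<notin> C" "x \<notin> A" "y \<in> A"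
    | (bw) "x \<notin> C" "y \<notin> C" "x \<notin> A" "y \<notin> A" "y \<in> B \<and> x \<in> W"
    | (o) "x \<notin> C" "y \<notin> C" "x \<notin> A" "y \<notin> A" "\<not> (y \<in> B \<and> x \<in> W)" by blast
  then show ?thesis
  proof cases
    case c
    then have "(y, x) \<notin> edges N" using C_disj edges_N by blast
    then show ?thesis using e c wN0 by simp
  next
    case a
    show ?thesis
    proof (cases "y \<in> P")
      case True then show ?thesis using e a wAB by simp
    next
      case False
      then have "(y, x) \<notin> edges N" using a parAB unfolding par_def by blast
      then show ?thesis using e a False wN0 by simp
    qed
  next
    case a2
    show ?thesis
    proof (cases "x \<in> W")
      case True then show ?thesis using e a2 chW by simp
    next
      case False
      then have "(y, x) \<notin> edges N" using a2 edges_N unfolding children_of_def par_def by blast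
      then show ?thesis using e a2 False wN0 by simp
    qed
  next
    case bw then show ?thesis using e unfolding weight_M by simp
  next
    case o then show ?thesis using e unfolding weight_M by auto
  qed
qed

lemma wN_ne: "(y, x) \<in> edges N \<Longrightarrow> weight N x y \<noteq> 0"
  using gN unfolding gfnn_def by blast

lemma N'_edges: "edges N' = edges N"
proof -
  have e: "edges N' = {(y, x) \<in> edges M. y \<notin> C \<and> x \<notin> C \<and> \<not> (y \<in> B \<and> x \<in> W)}
                \<union> {(y, x). y \<in> P \<and> x \<in> A}
                \<union> {(y, x). y \<in> A \<and> x \<in> W}
                \<union> {(y, x). y \<in> B \<and> x \<in> W \<and> weight M x y - al' y * \<nu> x \<noteq> 0}"
    using W_M mod_edges[of D M C B A P al' \<beta> "bias N" "- \<zeta>" \<kappa> \<nu> \<mu>] by simp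
  have w4: "\<And>x y. y \<in> B \<Longrightarrow> x \<in> W \<Longrightarrow> weight M x y - al' y * \<nu> x = weight N x y"
    using AB ABW C_disj B_sub W_nodes unfolding weight_M by auto
  show ?thesis
  proof (rule set_eqI, clarify)
    fix y x
    show "((y, x) \<in> edges N') = ((y, x) \<in> edges N)"
    proof
      assume h: "(y, x) \<in> edges N'"
      then consider "(y, x) \<in> edges M" "y \<notin> C" "x \<notin> C" "\<not> (y \<in> B \<and> x \<in> W)"
        | "y \<in> P" "x \<in> A" | "y \<in> A" "x \<in> W"
        | "y \<in> B" "x \<in> W" "weight M x y - al' y * \<nu> x \<noteq> 0"
        unfolding e by blast
      then show "(y, x) \<in> edges N"
      proof cases
        case 1 then show ?thesis unfolding edges_M by blast
      next
        case 2 then show ?thesis using parAB unfolding par_def by blast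
      next
        case 3 then show ?thesis using chW unfolding par_def by blast
      next
        case 4 then show ?thesis using w4 wN0 by force
      qed
    next
      assume h: "(y, x) \<in> edges N"
      have ny: "y \<notin> C" "x \<notin> C" using h edges_N C_disj by blast+
      consider "x \<in> A" | "x \<notin> A" "y \<in> A" | "y \<in> B \<and> x \<in> W" "x \<notin> A" "y \<notin> A"
        | "x \<notin> A" "y \<notin> A" "\<not> (y \<in> B \<and> x \<in> W)" by blast
      then show "(y, x) \<in> edges N'"
      proof cases
        case 1 then show ?thesis using h parAB unfolding e par_def by blast
      next
        case 2
        then have "x \<in> W" using h edges_N unfolding children_of_def par_def by blast
        then show ?thesis using 2 unfolding e by blast
      next
        case 3 then show ?thesis using h w4 wN_ne unfolding e by auto
      next
        case 4 then show ?thesis using h ny unfolding e edges_M by blast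
      qed
    qed
  qed
qed

lemma N'_bias: "bias N' x = bias N x"
proof -
  have e: "bias N' x = (if x \<in> C then 0 else if x \<in> A then bias N x
                   else if x \<in> W then bias M x + (- \<zeta>) * \<nu> x else bias M x)"
    using W_M mod_bias[of D M C B A P al' \<beta> "bias N" "- \<zeta>" \<kappa> \<nu> \<mu>] by simp
  have "x \<in> C \<Longrightarrow> bias N x = 0" using gN C_disj unfolding gfnn_def by blast
  then show ?thesis using e unfolding bias_M by auto
qed

lemma N'_out:
  "outc N' = outc N \<and> outw N' = outw N \<and> outputs N' = outputs N"
proof (cases "A \<subseteq> outputs N")
  case False
  then have Ao: "A \<inter> outputs N = {}" using outcnd by blast
  have oM: "outputs M = outputs N" using False outputs_M by simp
  have Co: "\<not> C \<subseteq> outputs M" using oM C_ne C_disj outputs_N_nodes by blast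
  have "outc N' = outc M" using Co mod_outc[of D M C B A P al' \<beta> "bias N" "- \<zeta>" \<kappa> \<nu> \<mu>] by (simp add: fun_eq_iff)
  moreover have "outc M = outc N" using False by (simp add: outc_M fun_eq_iff)
  moreover have "outw N' r x = outw N r x" for r x
  proof -
    have "outw N' r x = (if x \<in> C then 0 else outw M r x)" using Co mod_outw[of D M C B A P al' \<beta> "bias N" "- \<zeta>" \<kappa> \<nu> \<mu>] by simp
    moreover have "x \<in> C \<Longrightarrow> outw N r x = 0" using C_disj outputs_N_nodes outN0 by blast
    moreover have "x \<in> A \<Longrightarrow> outw N r x = 0" using Ao outN0 by blast
    ultimately show ?thesis using False unfolding outw_M by auto
  qed
  moreover have "outputs N' = outputs M" using Co mod_outputs[of D M C B A P al' \<beta> "bias N" "- \<zeta>" \<kappa> \<nu> \<mu>] by simp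
  ultimately show ?thesis using oM by auto
next
  case True
  then have mu: "\<forall>r<D. \<forall>u\<in>A. outw N r u = \<mu> r * \<alpha> u" using outcnd A_ne by blast
  have Co: "C \<subseteq> outputs M"
  proof -
    have "outputs M = (outputs N - (A \<union> B)) \<union> C \<union> {u \<in> B. \<exists>r<D. outw M r u \<noteq> 0}"
      using True outputs_M by presburger
    then show ?thesis by blast
  qed
  have oc: "outc N' = outc N"
  proof
    fix r
    show "outc N' r = outc N r" using Co True mod_outc[of D M C B A P al' \<beta> "bias N" "- \<zeta>" \<kappa> \<nu> \<mu>] by (simp add: outc_M)
  qed
  have ow: "outw N' r x = outw N r x" for r x
  proof (cases "r < D")
    case True': True
    have e: "outw N' r x = (if x \<in> A then - (al' x * \<mu> r)
                       else if x \<in> B then outw M r x - al' x * \<mu> r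
                       else if x \<in> C then 0 else outw M r x)"
      using Co True' mod_outw[of D M C B A P al' \<beta> "bias N" "- \<zeta>" \<kappa> \<nu> \<mu>] by simp
    have "x \<in> C \<Longrightarrow> outw N r x = 0" using C_disj outputs_N_nodes outN0 by blast
    then show ?thesis using e mu True' True AB unfolding outw_M by auto
  next
    case False
    have e: "outw N' r x = (if x \<in> C then 0 else outw M r x)"
      using Co False mod_outw[of D M C B A P al' \<beta> "bias N" "- \<zeta>" \<kappa> \<nu> \<mu>] by simp
    have "x \<in> C \<Longrightarrow> outw N r x = 0" using C_disj outputs_N_nodes outN0 by blast
    moreover have "outw N r x = 0" using gN False unfolding gfnn_def by auto
    ultimately show ?thesis using e False unfolding outw_M by auto
  qed
  have "outputs N' = (outputs M - (C \<union> B)) \<union> A \<union> {u \<in> B. \<exists>r<D. outw N' r u \<noteq> 0}"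
    by (rule trans[OF mod_outputs[of D M C B A P al' \<beta> "bias N" "- \<zeta>" \<kappa> \<nu> \<mu>] if_P[OF Co]])
  also have "{u \<in> B. \<exists>r<D. outw N' r u \<noteq> 0} = {u \<in> B. \<exists>r<D. outw N r u \<noteq> 0}"
    by (simp only: ow)
  also have "\<dots> = B \<inter> outputs N"
  proof -
    have "\<And>u. u \<in> outputs N \<Longrightarrow> \<exists>r<D. outw N r u \<noteq> 0" using ndN unfolding nondegenerate_def by blast
    moreover have "\<And>u r. u \<notin> outputs N \<Longrightarrow> outw N r u = 0" by (rule outN0)
    ultimately show ?thesis by blast
  qed
  also have "outputs M - (C \<union> B) = outputs N - (A \<union> B)"
    using True C_disj outputs_N_nodes unfolding outputs_M by auto
  finally have "outputs N' = outputs N" using True by auto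
  then show ?thesis using oc ow by (auto simp: fun_eq_iff)
qed

lemma N'_eq: "N' = N"
proof (rule net.equality)
  show "nodes N' = nodes N" by (rule N'_nodes)
  show "edges N' = edges N" by (rule N'_edges)
  show "inputs N' = inputs N" by (rule N'_inputs)
  show "outputs N' = outputs N" using N'_out by blast
  show "weight N' = weight N" using N'_weight by (simp add: fun_eq_iff)
  show "bias N' = bias N" using N'_bias by (simp add: fun_eq_iff)
  show "outc N' = outc N" using N'_out by blast
  show "outw N' = outw N" using N'_out by blast
  show "net.more N' = net.more N" by simp
qed

lemma reverse_mod:
  assumes nr: "\<not> reducible \<rho> M"
  shows "is_rho_modification \<rho> D M N"
  unfolding is_rho_modification_def
proof (intro conjI exI)
  show "\<not> reducible \<rho> M" by (rule nr)
  show "C \<noteq> {}" by (rule C_ne)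
  show "C \<subseteq> nodes M - inputs M" using nodes_M inputs_M C_disj gN unfolding gfnn_def by auto
  show "B \<subseteq> nodes M - inputs M" using nodes_M inputs_M B_sub AB by auto
  show "C \<inter> B = {}" using C_disj B_sub by auto
  show "\<forall>u\<in>C \<union> B. par M u = P" using par_M_B par_M_C by blast
  show "finite A" using A_sub gfnn_finite[OF gN] by (meson Diff_subset finite_subset)
  show "A \<noteq> {}" by (rule A_ne)
  show "A \<inter> nodes M = {}" using nodes_M C_disj A_sub by auto
  show "affine_symmetry \<rho> (C \<union> B \<union> A) (- \<zeta>) al' \<beta> (\<lambda>s. if s \<in> A then bias N s else bias M s)"
  proof -
    have "C \<union> B \<union> A = A \<union> B \<union> C" by blast
    moreover have "\<And>s. s \<in> A \<union> B \<union> C \<Longrightarrow> (if s \<in> C then \<gamma> s else bias N s) = (if s \<in> A then bias N s else bias M s)"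
      using ABW AB C_disj A_sub unfolding bias_M by auto
    ultimately show ?thesis using affine_symmetry_neg[OF aff] by simp
  qed
  show "\<forall>v\<in>P. \<kappa> v \<noteq> 0" by (rule kap)
  show "\<forall>u\<in>C \<union> B. \<forall>v\<in>P. weight M u v = \<beta> u * \<kappa> v"
    using wAB AP C_disj A_sub AB ABW P_nodes unfolding weight_M by auto
  show "\<forall>w\<in>children_of M C. C \<subseteq> par M w \<and> \<nu> w \<noteq> 0 \<and> (\<forall>u\<in>C. weight M w u = \<nu> w * al' u)"
    unfolding W_M
  proof
    fix w assume w: "w \<in> W"
    have "C \<subseteq> par M w" using w unfolding par_def edges_M by blast
    moreover have "\<nu> w \<noteq> 0" using w chW by blast
    moreover have "\<forall>u\<in>C. weight M w u = \<nu> w * al' u"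
      using w ABW C_disj A_sub W_nodes unfolding weight_M by auto
    ultimately show "C \<subseteq> par M w \<and> \<nu> w \<noteq> 0 \<and> (\<forall>u\<in>C. weight M w u = \<nu> w * al' u)" by blast
  qed
  show "C \<inter> outputs M = {} \<or> (C \<subseteq> outputs M \<and> (\<forall>r<D. \<forall>u\<in>C. outw M r u = \<mu> r * al' u))"
  proof (cases "A \<subseteq> outputs N")
    case True
    then show ?thesis using outputs_M unfolding outw_M by auto
  next
    case False
    then show ?thesis using outputs_M C_disj outputs_N_nodes by auto
  qed
  show "N = N'" using N'_eq by simp
qed

end



lemma step_sym_real:
  assumes st: "rho_step \<rho> D N N2"
  shows "(\<forall>t. \<forall>r<D. realization \<rho> N t r = realization \<rho> N2 t r) \<and> rho_step \<rho> D N2 N"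
proof -
  have rN: "regular \<rho> D N" and rM: "regular \<rho> D N2" and inp: "inputs N2 = inputs N"
    and m: "is_rho_modification \<rho> D N N2" using st unfolding rho_step_def by auto
  from m obtain A B C P \<alpha> \<beta> \<gamma> \<zeta> \<kappa> \<nu> \<mu> where body:
       "A \<noteq> {} \<and> A \<subseteq> nodes N - inputs N \<and> B \<subseteq> nodes N - inputs N \<and> A \<inter> B = {} \<and>
       (\<forall>u\<in>A \<union> B. par N u = P) \<and>
       finite C \<and> C \<noteq> {} \<and> C \<inter> nodes N = {} \<and>
       affine_symmetry \<rho> (A \<union> B \<union> C) \<zeta> \<alpha> \<beta> (\<lambda>s. if s \<in> C then \<gamma> s else bias N s) \<and>
       (\<forall>v\<in>P. \<kappa> v \<noteq> 0) \<and> (\<forall>u\<in>A \<union> B. \<forall>v\<in>P. weight N u v = \<beta> u * \<kappa> v) \<and>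
       (\<forall>w\<in>children_of N A. A \<subseteq> par N w \<and> \<nu> w \<noteq> 0 \<and>
                              (\<forall>u\<in>A. weight N w u = \<nu> w * \<alpha> u)) \<and>
       (A \<inter> outputs N = {} \<or>
        (A \<subseteq> outputs N \<and> (\<forall>r<D. \<forall>u\<in>A. outw N r u = \<mu> r * \<alpha> u))) \<and>
       N2 = modify D N A B C P \<alpha> \<beta> \<gamma> \<zeta> \<kappa> \<nu> \<mu>"
    unfolding is_rho_modification_def by blast
  have Meq: "N2 = modify D N A B C P \<alpha> \<beta> \<gamma> \<zeta> \<kappa> \<nu> \<mu>" using body by blast
  have gN: "gfnn D N" and ndN: "nondegenerate D N" using rN unfolding regular_def by auto
  have gM: "gfnn D (modify D N A B C P \<alpha> \<beta> \<gamma> \<zeta> \<kappa> \<nu> \<mu>)" using rM Meq unfolding regular_def by auto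
  have nrM: "\<not> reducible \<rho> (modify D N A B C P \<alpha> \<beta> \<gamma> \<zeta> \<kappa> \<nu> \<mu>)" using rM Meq unfolding regular_def by auto
  have loc: "modif \<rho> D N A B C P \<alpha> \<beta> \<gamma> \<zeta> \<kappa> \<nu> \<mu>"
    unfolding modif_def using gN ndN gM body by blast
  have r1: "\<forall>t. \<forall>r<D. realization \<rho> N t r = realization \<rho> N2 t r"
    using modif.realization_M[OF loc] Meq by simp
  have r2: "is_rho_modification \<rho> D N2 N"
    using modif.reverse_mod[OF loc nrM] Meq by simp
  show ?thesis using r1 r2 rN rM inp unfolding rho_step_def by simp
qed

lemma iso_sym: "rho_isomorphic \<rho> D N M \<Longrightarrow> rho_isomorphic \<rho> D M N"
proof -
  assume h: "rho_isomorphic \<rho> D N M"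
  have "(rho_step \<rho> D)\<^sup>*\<^sup>* N M" using h unfolding rho_isomorphic_def by simp
  then have "(rho_step \<rho> D)\<^sup>*\<^sup>* M N"
  proof (induction rule: rtranclp_induct)
    case base then show ?case by simp
  next
    case (step y z)
    then have "rho_step \<rho> D z y" using step_sym_real by blast
    then show ?case using step.IH by (rule converse_rtranclp_into_rtranclp)
  qed
  then show ?thesis using h unfolding rho_isomorphic_def by simp
qed

lemma iso_trans: "rho_isomorphic \<rho> D N M \<Longrightarrow> rho_isomorphic \<rho> D M K \<Longrightarrow> rho_isomorphic \<rho> D N K"
  unfolding rho_isomorphic_def by auto

lemma iso_real: "rho_isomorphic \<rho> D N M \<Longrightarrow> (\<forall>t. \<forall>r<D. realization \<rho> N t r = realization \<rho> M t r)"
proof -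
  assume h: "rho_isomorphic \<rho> D N M"
  have "(rho_step \<rho> D)\<^sup>*\<^sup>* N M" using h unfolding rho_isomorphic_def by simp
  then show ?thesis
  proof (induction rule: rtranclp_induct)
    case base then show ?case by simp
  next
    case (step y z)
    then show ?case using step_sym_real[OF step.hyps(2)] by simp
  qed
qed

lemma equiv_iso:
  assumes "\<And>N. N \<in> S \<Longrightarrow> regular \<rho> D N"
  shows "equiv S {(N, M). N \<in> S \<and> M \<in> S \<and> rho_isomorphic \<rho> D N M}"
proof (rule equivI)
  show "{(N, M). N \<in> S \<and> M \<in> S \<and> rho_isomorphic \<rho> D N M} \<subseteq> S \<times> S" by auto
  show "refl_on S {(N, M). N \<in> S \<and> M \<in> S \<and> rho_isomorphic \<rho> D N M}"
    by (rule refl_onI) (use assms in \<open>auto simp: rho_isomorphic_def\<close>)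
  show "sym {(N, M). N \<in> S \<and> M \<in> S \<and> rho_isomorphic \<rho> D N M}"
    by (rule symI) (auto intro: iso_sym)
  show "trans {(N, M). N \<in> S \<and> M \<in> S \<and> rho_isomorphic \<rho> D N M}"
    by (rule transI) (auto intro: iso_trans)
qed

theorem proposition5:
  fixes \<rho> :: "real \<Rightarrow> real" and Vin :: "'v set" and D :: nat
  assumes "nonlinearity \<rho>" and "finite Vin" and "Vin \<noteq> {}"
  shows "equiv (regular_GFNNs \<rho> Vin D)
           {(N, M). N \<in> regular_GFNNs \<rho> Vin D \<and> M \<in> regular_GFNNs \<rho> Vin D \<and>
                    rho_isomorphic \<rho> D N M} \<and>
         equiv (regular_LFNNs \<rho> Vin D)
           {(N, M). N \<in> regular_LFNNs \<rho> Vin D \<and> M \<in> regular_LFNNs \<rho> Vin D \<and>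
                    rho_isomorphic \<rho> D N M} \<and>
         (\<forall>N M. N \<in> regular_GFNNs \<rho> Vin D \<and> M \<in> regular_GFNNs \<rho> Vin D \<and>
               rho_isomorphic \<rho> D N M \<longrightarrow>
               (\<forall>t. \<forall>r<D. realization \<rho> N t r = realization \<rho> M t r))"
proof (intro conjI)
  show "equiv (regular_GFNNs \<rho> Vin D)
           {(N, M). N \<in> regular_GFNNs \<rho> Vin D \<and> M \<in> regular_GFNNs \<rho> Vin D \<and>
                    rho_isomorphic \<rho> D N M}"
    by (rule equiv_iso) (simp add: regular_GFNNs_def)
  show "equiv (regular_LFNNs \<rho> Vin D)
           {(N, M). N \<in> regular_LFNNs \<rho> Vin D \<and> M \<in> regular_LFNNs \<rho> Vin D \<and>
                    rho_isomorphic \<rho> D N M}"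
    by (rule equiv_iso) (simp add: regular_LFNNs_def)
  show "\<forall>N M. N \<in> regular_GFNNs \<rho> Vin D \<and> M \<in> regular_GFNNs \<rho> Vin D \<and>
               rho_isomorphic \<rho> D N M \<longrightarrow>
               (\<forall>t. \<forall>r<D. realization \<rho> N t r = realization \<rho> M t r)"
    using iso_real by blast
qed

end
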